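(* Let $G$ be a gate, $v\in V(G)$, and $C_1,C_2$ cliques of $G$ with $C_1\cap C_2=\{v\}$. Let $W=(w_1,\dots,w_t)$ with $t\geq 2$ be a chordless path vertex-disjoint from $G$. Then the graph $G'$ consisting of the union of $G-v$ and $W$, together with all edges between $w_1$ and the vertices of $C_1\setminus\{v\}$ and all edges between $w_t$ and the vertices of $C_2\setminus\{v\}$, is a gate.
   Context: All graphs are finite and simple. A clique is a maximal complete set of vertices. $G-v$ denotes the subgraph induced by $V(G)\setminus\{v\}$. Gates are defined recursively: (i) every chordless cycle $C_n$ with $n\geq 4$ is a gate; (ii) if $H$ is a gate, $C$ and $C'$ are disjoint cliques of $H$, and $P=(v_1,\dots,v_l)$ with $l\geq 2$ is a chordless path vertex-disjoint from $H$, then the union of $H$ and $P$ together with all edges between $v_1$ and the vertices of $C$ and all edges between $v_l$ and the vertices of $C'$ is a gate; (iii) there are no other gates. *)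

theory Defs
  imports Main
begin

definition simple_graph :: "'a set \<Rightarrow> 'a set set \<Rightarrow> bool" where
  "simple_graph V E \<longleftrightarrow> finite V \<and>
     (\<forall>e\<in>E. \<exists>x y. e = {x, y} \<and> x \<noteq> y \<and> x \<in> V \<and> y \<in> V)"

definition complete_set :: "'a set \<Rightarrow> 'a set set \<Rightarrow> 'a set \<Rightarrow> bool" where
  "complete_set V E K \<longleftrightarrow> K \<subseteq> V \<and> (\<forall>x\<in>K. \<forall>y\<in>K. x \<noteq> y \<longrightarrow> {x, y} \<in> E)"

definition clique :: "'a set \<Rightarrow> 'a set set \<Rightarrow> 'a set \<Rightarrow> bool" where
  "clique V E K \<longleftrightarrow> complete_set V E K \<and>
     (\<forall>K'. complete_set V E K' \<and> K \<subseteq> K' \<longrightarrow> K' = K)"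

definition path_edges :: "'a list \<Rightarrow> 'a set set" where
  "path_edges P = {{P ! i, P ! Suc i} | i. Suc i < length P}"

definition del_edges :: "'a set set \<Rightarrow> 'a \<Rightarrow> 'a set set" where
  "del_edges E v = {e \<in> E. v \<notin> e}"

inductive gate :: "'a set \<Rightarrow> 'a set set \<Rightarrow> bool" where
  cycle: "\<lbrakk> n \<ge> 4; bij_betw f {..<n} V;
            E = {{f i, f (Suc i mod n)} | i. i < n} \<rbrakk> \<Longrightarrow> gate V E"
| extend: "\<lbrakk> gate V E; clique V E C; clique V E C'; C \<inter> C' = {};
             length P \<ge> 2; distinct P; set P \<inter> V = {} \<rbrakk> \<Longrightarrow>
           gate (V \<union> set P)
                (E \<union> path_edges P \<union> {{hd P, c} | c. c \<in> C} \<union> {{last P, c} | c. c \<in> C'})"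

end

theory Submission
  imports Defs
begin

definition star :: "'a \<Rightarrow> 'a set \<Rightarrow> 'a set set" where
  "star x A = {{x, c} | c. c \<in> A}"

definition extE :: "'a set set \<Rightarrow> 'a set \<Rightarrow> 'a set \<Rightarrow> 'a list \<Rightarrow> 'a set set" where
  "extE E C C' P = E \<union> path_edges P \<union> star (hd P) C \<union> star (last P) C'"

definition replE :: "'a set set \<Rightarrow> 'a \<Rightarrow> 'a set \<Rightarrow> 'a set \<Rightarrow> 'a list \<Rightarrow> 'a set set" where
  "replE E v C1 C2 W = del_edges E v \<union> path_edges W \<union> star (hd W) (C1 - {v}) \<union> star (last W) (C2 - {v})"

lemma path_edges_Nil[simp]: "path_edges [] = {}" and path_edges_single[simp]: "path_edges [x] = {}"
  by (auto simp: path_edges_def)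

lemma path_edges_Cons2[simp]: "path_edges (x # y # zs) = insert {x, y} (path_edges (y # zs))"
proof (rule set_eqI, rule iffI)
  fix e assume "e \<in> path_edges (x # y # zs)"
  then obtain i where i: "Suc i < length (x#y#zs)" "e = {(x#y#zs) ! i, (x#y#zs) ! Suc i}"
    unfolding path_edges_def by blast
  show "e \<in> insert {x, y} (path_edges (y # zs))"
  proof (cases i)
    case 0 then show ?thesis using i by simp
  next
    case (Suc j) then show ?thesis using i unfolding path_edges_def by auto
  qed
next
  fix e assume "e \<in> insert {x, y} (path_edges (y # zs))"
  then show "e \<in> path_edges (x # y # zs)"
  proof
    assume "e = {x,y}" then show ?thesis unfolding path_edges_def
      by (auto intro!: exI[of _ 0])
  next
    assume "e \<in> path_edges (y # zs)"
    then obtain j where j: "Suc j < length (y#zs)" "e = {(y#zs) ! j, (y#zs) ! Suc j}"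
      unfolding path_edges_def by blast
    then show ?thesis unfolding path_edges_def by (auto intro!: exI[of _ "Suc j"])
  qed
qed

lemma path_edges_Cons: "path_edges (x # xs) = (if xs = [] then {} else insert {x, hd xs} (path_edges xs))"
  by (cases xs) auto

lemma path_edges_append:
  "path_edges (xs @ ys) = path_edges xs \<union> path_edges ys \<union> (if xs = [] \<or> ys = [] then {} else {{last xs, hd ys}})"
proof (induction xs)
  case Nil then show ?case by simp
next
  case (Cons x xs)
  show ?case
  proof (cases xs)
    case Nil then show ?thesis by (cases ys) auto
  next
    case (Cons a as)
    then show ?thesis using Cons.IH by auto
  qed
qed

lemma path_edges_rev[simp]: "path_edges (rev xs) = path_edges xs"
proof (induction xs)
  case Nil then show ?case by simp
next
  case (Cons x xs)
  then show ?case by (auto simp: path_edges_append path_edges_Cons last_rev insert_commute)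
qed

lemma path_edges_subset: "e \<in> path_edges xs \<Longrightarrow> e \<subseteq> set xs"
  unfolding path_edges_def by auto

lemma star_simps[simp]: "star x {} = {}" "star x (insert a A) = insert {x, a} (star x A)"
  "star x (A \<union> B) = star x A \<union> star x B"
  by (auto simp: star_def)

lemma del_edges_Un[simp]: "del_edges (A \<union> B) v = del_edges A v \<union> del_edges B v"
  by (auto simp: del_edges_def)

lemma del_edges_insert[simp]: "del_edges (insert e A) v = (if v \<in> e then del_edges A v else insert e (del_edges A v))"
  by (auto simp: del_edges_def)

lemma del_edges_empty[simp]: "del_edges {} v = {}"
  by (auto simp: del_edges_def)

lemma del_edges_star[simp]: "del_edges (star x A) v = (if x = v then {} else star x (A - {v}))"
  by (auto simp: del_edges_def star_def)

lemma del_edges_path_notin: "v \<notin> set xs \<Longrightarrow> del_edges (path_edges xs) v = path_edges xs"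
  using path_edges_subset unfolding del_edges_def by blast

lemma del_edges_path_mid:
  assumes "distinct (xs @ v # ys)"
  shows "del_edges (path_edges (xs @ v # ys)) v = path_edges xs \<union> path_edges ys"
proof -
  have "v \<notin> set xs" "v \<notin> set ys" using assms by auto
  then show ?thesis
    by (auto simp: path_edges_append path_edges_Cons del_edges_path_notin)
qed

lemma extE_rev: "extE E C C' (rev P) = extE E C' C P"
  by (auto simp: extE_def hd_rev last_rev)

lemma replE_rev: "replE E v C1 C2 (rev W) = replE E v C2 C1 W"
  by (auto simp: replE_def hd_rev last_rev)

lemma gate_ext: "gate V E \<Longrightarrow> clique V E C \<Longrightarrow> clique V E C' \<Longrightarrow> C \<inter> C' = {} \<Longrightarrow>
  length P \<ge> 2 \<Longrightarrow> distinct P \<Longrightarrow> set P \<inter> V = {} \<Longrightarrow> gate (V \<union> set P) (extE E C C' P)"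
  unfolding extE_def star_def by (rule gate.extend)

lemma clique_sub: "clique V E K \<Longrightarrow> K \<subseteq> V"
  by (simp add: clique_def complete_set_def)

lemma clique_compl: "clique V E K \<Longrightarrow> x \<in> K \<Longrightarrow> y \<in> K \<Longrightarrow> x \<noteq> y \<Longrightarrow> {x, y} \<in> E"
  by (simp add: clique_def complete_set_def)

lemma complete_edge: "complete_set V E K \<Longrightarrow> x \<in> K \<Longrightarrow> y \<in> K \<Longrightarrow> x \<noteq> y \<Longrightarrow> {x, y} \<in> E"
  by (simp add: complete_set_def)

lemma clique_max: "clique V E K \<Longrightarrow> complete_set V E K' \<Longrightarrow> K \<subseteq> K' \<Longrightarrow> K' = K"
  by (simp add: clique_def)

lemma clique_nonempty: "clique V E K \<Longrightarrow> V \<noteq> {} \<Longrightarrow> K \<noteq> {}"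
proof
  assume c: "clique V E K" and "V \<noteq> {}" and k: "K = {}"
  then obtain x where "x \<in> V" by blast
  then have "complete_set V E {x}" by (simp add: complete_set_def)
  with c k clique_max[of V E K "{x}"] show False by auto
qed

lemma clique_two: "clique V E K \<Longrightarrow> v \<in> K \<Longrightarrow> {v, u} \<in> E \<Longrightarrow> u \<in> V \<Longrightarrow> u \<noteq> v \<Longrightarrow> K - {v} \<noteq> {}"
proof
  assume c: "clique V E K" and "v \<in> K" "{v, u} \<in> E" "u \<in> V" "u \<noteq> v" and k: "K - {v} = {}"
  then have K: "K = {v}" by auto
  have "v \<in> V" using c `v \<in> K` clique_sub by blast
  have "complete_set V E {v, u}" using `{v,u} \<in> E` `u \<in> V` `v \<in> V`
    by (auto simp: complete_set_def insert_commute)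
  with c K clique_max[of V E K "{v,u}"] `u \<noteq> v` show False by auto
qed

locale ext_setup =
  fixes V :: "'a set" and E C C' P
  assumes I0: "\<forall>e\<in>E. \<exists>x y. e = {x,y} \<and> x \<noteq> y \<and> x \<in> V \<and> y \<in> V"
   and clC: "clique V E C" and clC': "clique V E C'" and disj: "C \<inter> C' = {}"
   and len: "length P \<ge> 2" and dist: "distinct P" and Pdisj: "set P \<inter> V = {}"
   and Vne: "V \<noteq> {}"
begin

lemma edgeE_V: "{x, y} \<in> E \<Longrightarrow> x \<in> V \<and> y \<in> V"
  using I0 by (metis doubleton_eq_iff insertI1 insert_commute)

lemma C_sub: "C \<subseteq> V" "C' \<subseteq> V"
  using clC clC' clique_sub by auto

lemma Pne: "P \<noteq> []" using len by auto

lemma hdP: "hd P = P ! 0" using Pne by (simp add: hd_conv_nth)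
lemma lastP: "last P = P ! (length P - 1)" using Pne by (simp add: last_conv_nth)

lemma nthP_notV: "i < length P \<Longrightarrow> P ! i \<notin> V"
  using Pdisj nth_mem by blast

lemma nthP_eq: "i < length P \<Longrightarrow> j < length P \<Longrightarrow> P ! i = P ! j \<longleftrightarrow> i = j"
  using dist by (simp add: nth_eq_iff_index_eq)

lemma nbr_P:
  assumes i: "i < length P" and e: "{P ! i, u} \<in> extE E C C' P"
  shows "(0 < i \<and> u = P ! (i - 1)) \<or> (Suc i < length P \<and> u = P ! Suc i) \<or> (i = 0 \<and> u \<in> C)
     \<or> (Suc i = length P \<and> u \<in> C')"
proof -
  have notV: "P ! i \<notin> V" using nthP_notV i by blast
  consider "{P ! i, u} \<in> E" | "{P ! i, u} \<in> path_edges P" | "{P ! i, u} \<in> star (hd P) C"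
    | "{P ! i, u} \<in> star (last P) C'" using e unfolding extE_def by blast
  then show ?thesis
  proof cases
    case 1 then show ?thesis using edgeE_V notV by blast
  next
    case 2
    then obtain j where j: "Suc j < length P" "{P ! i, u} = {P ! j, P ! Suc j}"
      unfolding path_edges_def by blast
    then consider "P ! i = P ! j" "u = P ! Suc j" | "P ! i = P ! Suc j" "u = P ! j"
      by (auto simp: doubleton_eq_iff)
    then show ?thesis
    proof cases
      case 1 then have "i = j" using nthP_eq i j by auto
      then show ?thesis using 1 j by auto
    next
      case 2 then have "i = Suc j" using nthP_eq i j by auto
      then show ?thesis using 2 j by auto
    qed
  next
    case 3
    then obtain c where c: "c \<in> C" "{P ! i, u} = {hd P, c}" unfolding star_def by blast
    then have "c \<in> V" using C_sub by blast
    then have "P ! i = hd P \<and> u = c" using c notV by (auto simp: doubleton_eq_iff)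
    then have "i = 0" "u = c" using hdP nthP_eq i Pne by auto
    then show ?thesis using c by auto
  next
    case 4
    then obtain c where c: "c \<in> C'" "{P ! i, u} = {last P, c}" unfolding star_def by blast
    then have "c \<in> V" using C_sub by blast
    then have "P ! i = last P \<and> u = c" using c notV by (auto simp: doubleton_eq_iff)
    then have "i = length P - 1" "u = c" using lastP nthP_eq i Pne by auto
    then have "Suc i = length P" using i by simp
    then show ?thesis using c `u = c` by blast
  qed
qed

lemma nbr_V:
  assumes x: "x \<in> V" and e: "{x, u} \<in> extE E C C' P"
  shows "({x, u} \<in> E \<and> u \<in> V) \<or> (x \<in> C \<and> u = hd P) \<or> (x \<in> C' \<and> u = last P)"
proof -
  have xP: "x \<notin> set P" using x Pdisj by blast
  consider "{x, u} \<in> E" | "{x, u} \<in> path_edges P" | "{x, u} \<in> star (hd P) C"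
    | "{x, u} \<in> star (last P) C'" using e unfolding extE_def by blast
  then show ?thesis
  proof cases
    case 1 then show ?thesis using edgeE_V by blast
  next
    case 2 then show ?thesis using path_edges_subset xP by blast
  next
    case 3
    then obtain c where c: "c \<in> C" "{x, u} = {hd P, c}" unfolding star_def by blast
    have "hd P \<in> set P" using Pne by simp
    then show ?thesis using c xP by (auto simp: doubleton_eq_iff)
  next
    case 4
    then obtain c where c: "c \<in> C'" "{x, u} = {last P, c}" unfolding star_def by blast
    have "last P \<in> set P" using Pne by simp
    then show ?thesis using c xP by (auto simp: doubleton_eq_iff)
  qed
qed

end

context ext_setup begin

definition "Lc i = (if i = 0 then insert (P ! 0) C else {P ! (i - 1), P ! i})"
definition "Rc i = (if Suc i = length P then insert (P ! i) C' else {P ! i, P ! Suc i})"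

lemma E_sub: "E \<subseteq> extE E C C' P" by (auto simp: extE_def)

lemma compl_Lc: "i < length P \<Longrightarrow> complete_set (V \<union> set P) (extE E C C' P) (Lc i)"
proof (cases "i = 0")
  case True
  assume "i < length P"
  have "insert (P ! 0) C \<subseteq> V \<union> set P" using C_sub Pne by auto
  moreover have "{x, y} \<in> extE E C C' P" if "x \<in> insert (P ! 0) C" "y \<in> insert (P ! 0) C" "x \<noteq> y" for x y
  proof -
    have st: "{P ! 0, c} \<in> extE E C C' P" if "c \<in> C" for c
      using that hdP unfolding extE_def star_def by auto
    show ?thesis
    proof (cases "x \<in> C \<and> y \<in> C")
      case True then show ?thesis using clique_compl[OF clC] E_sub that by blast
    next
      case False
      then show ?thesis using that st by (auto simp: insert_commute)
    qed
  qed
  ultimately show ?thesis using True by (simp add: Lc_def complete_set_def)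
next
  case False
  assume i: "i < length P"
  have "{P ! (i - 1), P ! Suc (i - 1)} \<in> path_edges P" using False i unfolding path_edges_def
    by (intro CollectI exI[of _ "i - 1"]) auto
  then have "{P ! (i - 1), P ! i} \<in> extE E C C' P" using False by (simp add: extE_def)
  then show ?thesis using False i by (auto simp: Lc_def complete_set_def insert_commute)
qed

lemma compl_Rc: "i < length P \<Longrightarrow> complete_set (V \<union> set P) (extE E C C' P) (Rc i)"
proof (cases "Suc i = length P")
  case True
  assume "i < length P"
  have "insert (P ! i) C' \<subseteq> V \<union> set P" using C_sub `i < length P` by auto
  moreover have "{x, y} \<in> extE E C C' P" if "x \<in> insert (P ! i) C'" "y \<in> insert (P ! i) C'" "x \<noteq> y" for x y
  proof -
    have lP: "last P = P ! i" using lastP True by (metis diff_Suc_1)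
    have st: "{P ! i, c} \<in> extE E C C' P" if "c \<in> C'" for c
      using that unfolding extE_def star_def lP by auto
    show ?thesis
    proof (cases "x \<in> C' \<and> y \<in> C'")
      case True then show ?thesis using clique_compl[OF clC'] E_sub that by blast
    next
      case False
      then show ?thesis using that st by (auto simp: insert_commute)
    qed
  qed
  ultimately show ?thesis using True by (simp add: Rc_def complete_set_def)
next
  case False
  assume i: "i < length P"
  then have "{P ! i, P ! Suc i} \<in> path_edges P" using False unfolding path_edges_def
    by (intro CollectI exI[of _ "i"]) auto
  then have "{P ! i, P ! Suc i} \<in> extE E C C' P" by (simp add: extE_def)
  then show ?thesis using False i by (auto simp: Rc_def complete_set_def insert_commute)
qed

lemma cl_P:
  assumes i: "i < length P" and K: "clique (V \<union> set P) (extE E C C' P) K" and p: "P ! i \<in> K"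
  shows "K = Lc i \<or> K = Rc i"
proof -
  define left where "left u \<longleftrightarrow> (0 < i \<and> u = P ! (i - 1)) \<or> (i = 0 \<and> u \<in> C)" for u
  define right where "right u \<longleftrightarrow> (Suc i < length P \<and> u = P ! Suc i) \<or> (Suc i = length P \<and> u \<in> C')" for u
  have LR: "left u \<or> right u" if "u \<in> K" "u \<noteq> P ! i" for u
    using nbr_P[OF i clique_compl[OF K p that(1)]] that unfolding left_def right_def by auto
  have noLR: False if u: "u \<in> K" "left u" and w: "w \<in> K" "right w" for u w
  proof -
    have CV: "C \<subseteq> V" "C' \<subseteq> V" using C_sub by auto
    have rw: "(Suc i < length P \<and> w = P ! Suc i) \<or> w \<in> C'" using w(2) unfolding right_def by blast
    have "u \<noteq> w"
    proof
      assume uw: "u = w"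
      from u(2) consider (a) "0 < i" "u = P ! (i - 1)" | (b) "i = 0" "u \<in> C" unfolding left_def by blast
      then show False
      proof cases
        case a
        have "P ! (i - 1) \<notin> V" using nthP_notV[of "i - 1"] i by simp
        then have "w \<notin> C'" using a uw CV by blast
        then have si: "Suc i < length P" "w = P ! Suc i" using rw by auto
        have "P ! (i - 1) = P ! Suc i" using a(2) uw si(2) by simp
        moreover have "i - 1 < length P" using i by simp
        ultimately have "i - 1 = Suc i" using nthP_eq[of "i - 1" "Suc i"] si(1) by blast
        then show False by simp
      next
        case b
        then have "w \<in> V" using uw CV by blast
        then have "w \<in> C'" using rw nthP_notV[of "Suc i"] by auto
        then show False using b uw disj by blast
      qed
    qed
    then have e: "{u, w} \<in> extE E C C' P" using clique_compl[OF K u(1) w(1)] by simp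
    show False
    proof (cases "0 < i")
      case True
      then have u': "u = P ! (i - 1)" using u(2) unfolding left_def by auto
      have "i - 1 < length P" using i by auto
      from nbr_P[OF this e[unfolded u']] show False
      proof (elim disjE conjE)
        assume a: "0 < i - 1" "w = P ! (i - 1 - 1)"
        then have "w \<notin> V" using nthP_notV[of "i - 1 - 1"] i by simp
        then have si: "Suc i < length P" "w = P ! Suc i" using rw CV by auto
        have "P ! (i - 1 - 1) = P ! Suc i" using a(2) si(2) by simp
        moreover have "i - 1 - 1 < length P" using i by simp
        ultimately have "i - 1 - 1 = Suc i" using nthP_eq[of "i - 1 - 1" "Suc i"] si(1) by blast
        then show False by simp
      next
        assume a: "Suc (i - 1) < length P" "w = P ! Suc (i - 1)"
        then have "w \<notin> V" using nthP_notV[of "Suc (i - 1)"] by simp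
        then have si: "Suc i < length P" "w = P ! Suc i" using rw CV by auto
        have "P ! Suc (i - 1) = P ! Suc i" using a(2) si(2) by simp
        then have "Suc (i - 1) = Suc i" using nthP_eq[of "Suc (i - 1)" "Suc i"] si(1) a(1) by blast
        then show False using True by simp
      next
        assume a: "i - 1 = 0" "w \<in> C"
        then have "w \<in> V" using CV by blast
        then have "w \<in> C'" using rw nthP_notV[of "Suc i"] by auto
        then show False using a disj by blast
      next
        assume "Suc (i - 1) = length P" "w \<in> C'"
        then show False using True i by simp
      qed
    next
      case False
      then have u': "u \<in> C" "i = 0" using u(2) unfolding left_def by auto
      then have "u \<in> V" using CV by auto
      from nbr_V[OF this e] show False
      proof (elim disjE conjE)
        assume "{u, w} \<in> E" "w \<in> V"
        then have "\<not> (Suc i < length P \<and> w = P ! Suc i)" using nthP_notV[of "Suc i"] by blast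
        then have "Suc i = length P" using w(2) unfolding right_def by meson
        then show False using u'(2) len by simp
      next
        assume a: "u \<in> C" "w = hd P"
        then have "w \<notin> V" using hdP nthP_notV[of 0] Pne by simp
        then have si: "Suc i < length P" "w = P ! Suc i" using rw CV by auto
        have "P ! 0 = P ! Suc 0" using a(2) si(2) hdP u'(2) by simp
        then have "(0::nat) = Suc 0" using nthP_eq[of 0 "Suc 0"] si(1) u'(2) Pne by auto
        then show False by simp
      next
        assume "u \<in> C'" "w = last P"
        then show False using u' disj by blast
      qed
    qed
  qed
  show ?thesis
  proof (cases "\<exists>w\<in>K. right w")
    case True
    then have "\<forall>u\<in>K. u \<noteq> P ! i \<longrightarrow> right u" using LR noLR by blast
    then have "K \<subseteq> Rc i" unfolding right_def Rc_def using p by auto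
    then have "Rc i = K" using clique_max[OF K compl_Rc[OF i]] by blast
    then show ?thesis by simp
  next
    case False
    then have "\<forall>u\<in>K. u \<noteq> P ! i \<longrightarrow> left u" using LR by blast
    then have "K \<subseteq> Lc i" unfolding left_def Lc_def using p by auto
    then have "Lc i = K" using clique_max[OF K compl_Lc[OF i]] by blast
    then show ?thesis by simp
  qed
qed

end

context ext_setup begin

lemma Cne: "C \<noteq> {}" "C' \<noteq> {}" using clique_nonempty clC clC' Vne by auto

lemma ext_rev: "ext_setup V E C' C (rev P)"
  using I0 clC clC' disj len dist Pdisj Vne unfolding ext_setup_def by (simp add: Int_commute)

lemma EG_sub: "E \<subseteq> extE E C C' P" by (auto simp: extE_def)

lemma cl_V:
  assumes K: "clique (V \<union> set P) (extE E C C' P) K" and d: "K \<inter> set P = {}"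
  shows "clique V E K \<and> K \<noteq> C \<and> K \<noteq> C'"
proof -
  have KV: "K \<subseteq> V" using clique_sub[OF K] d by blast
  have cs: "complete_set V E K"
    unfolding complete_set_def
  proof (intro conjI ballI impI)
    show "K \<subseteq> V" by (rule KV)
    fix x y assume xy: "x \<in> K" "y \<in> K" "x \<noteq> y"
    have e: "{x, y} \<in> extE E C C' P" using clique_compl[OF K xy] .
    have "y \<notin> set P" using xy d by blast
    moreover have "hd P \<in> set P" "last P \<in> set P" using Pne by auto
    ultimately show "{x, y} \<in> E" using nbr_V[OF _ e] KV xy by auto
  qed
  have mx: "K' = K" if "complete_set V E K'" "K \<subseteq> K'" for K'
  proof -
    have "complete_set (V \<union> set P) (extE E C C' P) K'"
      using that(1) EG_sub unfolding complete_set_def by blast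
    then show ?thesis using clique_max[OF K] that(2) by blast
  qed
  have clK: "clique V E K" using cs mx unfolding clique_def by blast
  have "K \<noteq> C"
  proof
    assume KC: "K = C"
    have "K \<subseteq> Lc 0" unfolding Lc_def KC by auto
    then have "Lc 0 = K" using clique_max[OF K compl_Lc[of 0]] Pne by auto
    then have "P ! 0 \<in> K" unfolding Lc_def by auto
    then show False using d Pne by (metis disjoint_iff length_greater_0_conv nth_mem)
  qed
  moreover have "K \<noteq> C'"
  proof
    assume KC: "K = C'"
    have "K \<subseteq> Rc (length P - 1)" unfolding Rc_def KC using Pne by auto
    then have "Rc (length P - 1) = K" using clique_max[OF K compl_Rc[of "length P - 1"]] Pne by auto
    then have "P ! (length P - 1) \<in> K" unfolding Rc_def using Pne by auto
    then show False using d Pne by (metis diff_less disjoint_iff length_greater_0_conv nth_mem zero_less_one)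
  qed
  ultimately show ?thesis using clK by blast
qed

lemma cl_hd: "clique (V \<union> set P) (extE E C C' P) (insert (hd P) C)"
proof -
  have L0: "Lc 0 = insert (hd P) C" unfolding Lc_def hdP by simp
  have cs: "complete_set (V \<union> set P) (extE E C C' P) (insert (hd P) C)"
    using compl_Lc[of 0] Pne L0 by simp
  obtain c where c: "c \<in> C" using Cne by blast
  have cV: "c \<in> V" using c C_sub by blast
  have mx: "K' = insert (hd P) C" if K': "complete_set (V \<union> set P) (extE E C C' P) K'"
     and sub: "insert (hd P) C \<subseteq> K'" for K'
  proof (rule ccontr)
    assume "K' \<noteq> insert (hd P) C"
    then have "\<not> K' \<subseteq> insert (hd P) C" using sub by (metis subset_antisym)
    then obtain u where u: "u \<in> K'" "u \<notin> insert (hd P) C" by (auto simp: subset_iff)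
    have h: "hd P \<in> K'" using sub by blast
    have "u \<noteq> hd P" using u(2) by blast
    then have "{hd P, u} \<in> extE E C C' P"
      using complete_edge[OF K' h u(1)] by simp
    then have "{P ! 0, u} \<in> extE E C C' P" using hdP by simp
    from nbr_P[OF _ this] Pne u(2)
    have u1: "Suc 0 < length P" "u = P ! Suc 0" using len by auto
    have "c \<in> K'" using sub c by blast
    moreover have "c \<noteq> u" using u1 cV nthP_notV[of "Suc 0"] by auto
    ultimately have "{c, u} \<in> extE E C C' P" using complete_edge[OF K' _ u(1)] by simp
    from nbr_V[OF cV this] show False
    proof (elim disjE conjE)
      assume "{c, u} \<in> E" "u \<in> V" then show False using u1 nthP_notV[of "Suc 0"] by simp
    next
      assume "c \<in> C" "u = hd P"
      then have "P ! 0 = P ! Suc 0" using u1 hdP by simp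
      then show False using nthP_eq[of 0 "Suc 0"] u1(1) Pne by simp
    next
      assume "c \<in> C'" "u = last P" then show False using c disj by blast
    qed
  qed
  show ?thesis using cs mx unfolding clique_def by blast
qed

lemma cl_last: "clique (V \<union> set P) (extE E C C' P) (insert (last P) C')"
  using ext_setup.cl_hd[OF ext_rev] by (simp add: extE_rev hd_rev)

lemma cl_Vx:
  assumes K: "clique (V \<union> set P) (extE E C C' P) K" and x: "x \<in> V" "x \<in> K"
  shows "K \<inter> set P = {} \<or> (x \<in> C \<and> K = insert (hd P) C) \<or> (x \<in> C' \<and> K = insert (last P) C')"
proof (cases "K \<inter> set P = {}")
  case False
  then obtain i where i: "i < length P" "P ! i \<in> K" by (metis disjoint_iff in_set_conv_nth)
  have xP: "x \<noteq> P ! j" if "j < length P" for j using x(1) nthP_notV[OF that] by blast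
  from cl_P[OF i(1) K i(2)] show ?thesis
  proof
    assume KL: "K = Lc i"
    show ?thesis
    proof (cases "i = 0")
      case True
      then have "K = insert (hd P) C" using KL hdP unfolding Lc_def by simp
      moreover have "x \<noteq> hd P" using xP[of 0] hdP Pne by simp
      ultimately show ?thesis using x(2) by blast
    next
      case False
      then have "K = {P ! (i - 1), P ! i}" using KL unfolding Lc_def by simp
      moreover have "x \<noteq> P ! (i - 1)" "x \<noteq> P ! i" using xP[of i] xP[of "i - 1"] i(1) by auto
      ultimately show ?thesis using x(2) by auto
    qed
  next
    assume KR: "K = Rc i"
    show ?thesis
    proof (cases "Suc i = length P")
      case True
      then have "last P = P ! i" using lastP by (metis diff_Suc_1)
      then have "K = insert (last P) C'" using KR True unfolding Rc_def by simp
      moreover have "x \<noteq> last P" using xP[of i] i(1) `last P = P ! i` by simp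
      ultimately show ?thesis using x(2) by blast
    next
      case False
      then have "Suc i < length P" using i(1) by simp
      moreover have "K = {P ! i, P ! Suc i}" using KR False unfolding Rc_def by simp
      moreover have "x \<noteq> P ! Suc i" "x \<noteq> P ! i" using xP[of i] xP[of "Suc i"] i(1) `Suc i < length P` by auto
      ultimately show ?thesis using x(2) by auto
    qed
  qed
qed simp

lemma CP: "C \<inter> set P = {}" "C' \<inter> set P = {}" using C_sub Pdisj by auto

lemma phi_clique:
  assumes K: "clique (V \<union> set P) (extE E C C' P) K" and x: "x \<in> V" "x \<in> K"
  shows "clique V E (K - set P)"
proof -
  have hP: "hd P \<in> set P" "last P \<in> set P" using Pne by auto
  from cl_Vx[OF K x] show ?thesis
  proof (elim disjE conjE)
    assume "K \<inter> set P = {}"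
    then have "K - set P = K" by blast
    then show ?thesis using cl_V[OF K] `K \<inter> set P = {}` by simp
  next
    assume "K = insert (hd P) C"
    then have "K - set P = C" using CP hP by blast
    then show ?thesis using clC by simp
  next
    assume "K = insert (last P) C'"
    then have "K - set P = C'" using CP hP by blast
    then show ?thesis using clC' by simp
  qed
qed

lemma phi_inj:
  assumes K: "clique (V \<union> set P) (extE E C C' P) K" and x: "x \<in> V" "x \<in> K"
    and K': "clique (V \<union> set P) (extE E C C' P) K'" and x': "x \<in> K'"
    and eq: "K - set P = K' - set P"
  shows "K = K'"
proof -
  have hP: "hd P \<in> set P" "last P \<in> set P" using Pne by auto
  have CC: "C \<noteq> C'" using Cne disj by auto
  have i1: "insert (hd P) C - set P = C" "insert (last P) C' - set P = C'" using CP hP by blast+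
  have ne: "insert (hd P) C \<inter> set P \<noteq> {}" "insert (last P) C' \<inter> set P \<noteq> {}" using hP by blast+
  from cl_Vx[OF K x] cl_Vx[OF K' x(1) x'] show ?thesis
  proof (elim disjE conjE)
    assume a: "K \<inter> set P = {}" "K' \<inter> set P = {}"
    then have a1: "K - set P = K" "K' - set P = K'" by blast+
    have "K = K - set P" using a1(1) by (rule sym)
    also have "\<dots> = K' - set P" by (rule eq)
    also have "\<dots> = K'" by (rule a1(2))
    finally show ?thesis .
  next
    assume a: "K \<inter> set P = {}" "K' = insert (hd P) C"
    have a1: "K - set P = K" using a(1) by blast
    have "K = K - set P" using a1(1) by (rule sym)
    also have "\<dots> = K' - set P" by (rule eq)
    also have "\<dots> = insert (hd P) C - set P" using a(2) by (rule arg_cong)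
    also have "\<dots> = C" by (rule i1(1))
    finally have "K = C" .
    then show ?thesis using cl_V[OF K] a by simp
  next
    assume a: "K \<inter> set P = {}" "K' = insert (last P) C'"
    have a1: "K - set P = K" using a(1) by blast
    have "K = K - set P" using a1(1) by (rule sym)
    also have "\<dots> = K' - set P" by (rule eq)
    also have "\<dots> = insert (last P) C' - set P" using a(2) by (rule arg_cong)
    also have "\<dots> = C'" by (rule i1(2))
    finally have "K = C'" .
    then show ?thesis using cl_V[OF K] a by simp
  next
    assume a: "K = insert (hd P) C" "K' \<inter> set P = {}"
    have a1: "K' - set P = K'" using a(2) by blast
    have "K' = K' - set P" using a1 by (rule sym)
    also have "\<dots> = K - set P" by (rule eq[symmetric])
    also have "\<dots> = insert (hd P) C - set P" using a(1) by (rule arg_cong)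
    also have "\<dots> = C" by (rule i1(1))
    finally have "K' = C" .
    then show ?thesis using cl_V[OF K'] a by simp
  next
    assume a: "K = insert (hd P) C" "K' = insert (hd P) C"
    then show ?thesis by simp
  next
    assume a: "K = insert (hd P) C" "K' = insert (last P) C'"
    then have "C = C'" using eq i1 by metis
    then show ?thesis using CC by simp
  next
    assume a: "K = insert (last P) C'" "K' \<inter> set P = {}"
    have a1: "K' - set P = K'" using a(2) by blast
    have "K' = K' - set P" using a1 by (rule sym)
    also have "\<dots> = K - set P" by (rule eq[symmetric])
    also have "\<dots> = insert (last P) C' - set P" using a(1) by (rule arg_cong)
    also have "\<dots> = C'" by (rule i1(2))
    finally have "K' = C'" .
    then show ?thesis using cl_V[OF K'] a by simp
  next
    assume a: "K = insert (last P) C'" "K' = insert (hd P) C"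
    then have "C = C'" using eq i1 by metis
    then show ?thesis using CC by simp
  next
    assume a: "K = insert (last P) C'" "K' = insert (last P) C'"
    then show ?thesis by simp
  qed
qed

end

lemma sucmod: "i < n \<Longrightarrow> Suc i mod n = (if Suc i = n then 0 else Suc i)"
  by auto

locale cyc =
  fixes n :: nat and g :: "nat \<Rightarrow> 'a" and V E
  assumes n4: "n \<ge> 4" and bij: "bij_betw g {..<n} V"
    and Edef: "E = {{g i, g (Suc i mod n)} | i. i < n}"
begin

lemma gin: "i < n \<Longrightarrow> g i \<in> V" using bij by (auto simp: bij_betw_def)

lemma ginj: "i < n \<Longrightarrow> j < n \<Longrightarrow> g i = g j \<longleftrightarrow> i = j"
  using bij by (auto simp: bij_betw_def inj_on_def)

lemma Vg: "x \<in> V \<Longrightarrow> \<exists>i<n. x = g i"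
  using bij by (auto simp: bij_betw_def)

lemma memE: "e \<in> E \<longleftrightarrow> (\<exists>i<n. e = {g i, g (Suc i mod n)})"
  unfolding Edef by blast

lemma edge_last: assumes "{g (n - 1), u} \<in> E" shows "u = g (n - 2) \<or> u = g 0"
proof -
  obtain i where i: "i < n" "{g (n - 1), u} = {g i, g (Suc i mod n)}" using assms memE by blast
  have sm: "Suc i mod n < n" using n4 by simp
  have n1: "n - 1 < n" using n4 by simp
  from i(2) consider "g (n - 1) = g i" "u = g (Suc i mod n)" | "g (n - 1) = g (Suc i mod n)" "u = g i"
    by (auto simp: doubleton_eq_iff)
  then show ?thesis
  proof cases
    case 1
    then have "n - 1 = i" using ginj[OF n1 i(1)] by simp
    then have "Suc i = n" using n4 by simp
    then have "Suc i mod n = 0" by simp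
    then show ?thesis using 1 by simp
  next
    case 2
    then have "n - 1 = Suc i mod n" using ginj[OF n1 sm] by simp
    then have "i = n - 2" using i(1) n4 sucmod[OF i(1)] by (auto split: if_splits)
    then show ?thesis using 2 by simp
  qed
qed

lemma nonadj: "{g (n - 2), g 0} \<notin> E"
proof
  assume "{g (n - 2), g 0} \<in> E"
  then obtain i where i: "i < n" "{g (n - 2), g 0} = {g i, g (Suc i mod n)}" using memE by blast
  have sm: "Suc i mod n < n" using n4 by simp
  have n2: "n - 2 < n" "0 < n" using n4 by auto
  from i(2) consider "g (n - 2) = g i" "g 0 = g (Suc i mod n)" | "g (n - 2) = g (Suc i mod n)" "g 0 = g i"
    by (auto simp: doubleton_eq_iff)
  then show False
  proof cases
    case 1
    then have "n - 2 = i" "0 = Suc i mod n" using ginj[OF n2(1) i(1)] ginj[OF n2(2) sm] by auto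
    then show False using n4 sucmod[OF i(1)] by (auto split: if_splits)
  next
    case 2
    then have "n - 2 = Suc i mod n" "0 = i" using ginj[OF n2(1) sm] ginj[OF n2(2) i(1)] by auto
    then show False using n4 sucmod[OF i(1)] by (auto split: if_splits)
  qed
qed

lemma edgeA: "{g (n - 2), g (n - 1)} \<in> E"
proof -
  have "n - 2 < n" "Suc (n - 2) mod n = n - 1" using n4 by auto
  then show ?thesis unfolding memE by (metis)
qed

lemma edgeB: "{g (n - 1), g 0} \<in> E"
proof -
  have "n - 1 < n" "Suc (n - 1) mod n = 0" using n4 by auto
  then show ?thesis unfolding memE by (metis)
qed

lemma cyc_clique:
  assumes K: "clique V E K" and v: "g (n - 1) \<in> K"
  shows "K = {g (n - 2), g (n - 1)} \<or> K = {g (n - 1), g 0}"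
proof -
  have nb: "u = g (n - 2) \<or> u = g 0" if "u \<in> K" "u \<noteq> g (n - 1)" for u
    using edge_last clique_compl[OF K v that(1) that(2)[symmetric]] by blast
  have n12: "g (n - 2) \<noteq> g (n - 1)" "g 0 \<noteq> g (n - 1)" "g (n - 2) \<noteq> g 0"
    using ginj[of "n - 2" "n - 1"] ginj[of 0 "n - 1"] ginj[of "n - 2" 0] n4 by auto
  have notboth: "\<not> (g (n - 2) \<in> K \<and> g 0 \<in> K)"
    using clique_compl[OF K, of "g (n - 2)" "g 0"] nonadj n12 by blast
  have VA: "{g (n - 2), g (n - 1)} \<subseteq> V" "{g (n - 1), g 0} \<subseteq> V" using gin n4 by auto
  have cA: "complete_set V E {g (n - 2), g (n - 1)}"
    using VA edgeA unfolding complete_set_def by (auto simp: insert_commute)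
  have cB: "complete_set V E {g (n - 1), g 0}"
    using VA edgeB unfolding complete_set_def by (auto simp: insert_commute)
  show ?thesis
  proof (cases "g 0 \<in> K")
    case True
    then have "K \<subseteq> {g (n - 1), g 0}" using nb notboth by blast
    then have "{g (n - 1), g 0} = K" using clique_max[OF K cB] v True by blast
    then show ?thesis by simp
  next
    case False
    then have "K \<subseteq> {g (n - 2), g (n - 1)}" using nb by blast
    then have "{g (n - 2), g (n - 1)} = K" using clique_max[OF K cA] v by blast
    then show ?thesis by simp
  qed
qed

lemma cyc_I0: "\<forall>e\<in>E. \<exists>x y. e = {x, y} \<and> x \<noteq> y \<and> x \<in> V \<and> y \<in> V"
proof
  fix e assume "e \<in> E"
  then obtain i where i: "i < n" "e = {g i, g (Suc i mod n)}" using memE by blast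
  have sm: "Suc i mod n < n" using n4 by simp
  have "i \<noteq> Suc i mod n" using sucmod[OF i(1)] n4 i(1) by auto
  then have "g i \<noteq> g (Suc i mod n)" using ginj[OF i(1) sm] by simp
  then show "\<exists>x y. e = {x, y} \<and> x \<noteq> y \<and> x \<in> V \<and> y \<in> V" using i gin sm by blast
qed

lemma cyc_I1: "x \<in> V \<Longrightarrow> \<exists>y. {x, y} \<in> E"
  using Vg memE by blast

end

lemma rotate:
  assumes c: "cyc n f V E" and k: "k < n"
  shows "\<exists>g. cyc n g V E \<and> g (n - 1) = f k"
proof -
  interpret cyc n f V E by (rule c)
  define r where "r i = (if i + k + 1 < n then i + k + 1 else i + k + 1 - n)" for i
  have rlt: "r i < n" if "i < n" for i using that k unfolding r_def by (cases "i + k + 1 < n") simp_all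
  have rinj: "inj_on r {..<n}" unfolding inj_on_def r_def using k by auto
  have rsurj: "\<exists>i<n. r i = j" if "j < n" for j
  proof (cases "j \<ge> k + 1")
    case True then show ?thesis using that k by (intro exI[of _ "j - k - 1"]) (auto simp: r_def)
  next
    case False then show ?thesis using that k by (intro exI[of _ "j + n - k - 1"]) (auto simp: r_def)
  qed
  have rim: "r ` {..<n} = {..<n}" using rlt rsurj by fastforce
  have rbij: "bij_betw r {..<n} {..<n}" using rinj rim by (simp add: bij_betw_def)
  define g where "g = f \<circ> r"
  have gbij: "bij_betw g {..<n} V" unfolding g_def using bij_betw_trans[OF rbij bij] .
  have rsuc: "r (Suc i mod n) = Suc (r i) mod n" if "i < n" for i
    using that k n4 by (auto simp: r_def sucmod)
  have "E = {{g i, g (Suc i mod n)} | i. i < n}"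
  proof (rule set_eqI, rule iffI)
    fix e assume "e \<in> E"
    then obtain j where j: "j < n" "e = {f j, f (Suc j mod n)}" using memE by blast
    obtain i where i: "i < n" "r i = j" using rsurj[OF j(1)] by blast
    have "e = {g i, g (Suc i mod n)}" using j i rsuc[OF i(1)] by (simp add: g_def)
    then show "e \<in> {{g i, g (Suc i mod n)} | i. i < n}" using i(1) by blast
  next
    fix e assume "e \<in> {{g i, g (Suc i mod n)} | i. i < n}"
    then obtain i where i: "i < n" "e = {g i, g (Suc i mod n)}" by blast
    have "e = {f (r i), f (Suc (r i) mod n)}" using i rsuc[OF i(1)] by (simp add: g_def)
    then show "e \<in> E" using memE rlt[OF i(1)] by blast
  qed
  moreover have "g (n - 1) = f k" using k n4 by (simp add: g_def r_def)
  ultimately show ?thesis using gbij n4 unfolding cyc_def by blast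
qed

definition I2 :: "'a set \<Rightarrow> 'a set set \<Rightarrow> bool" where
  "I2 V E \<longleftrightarrow> (\<forall>x K1 K2 K3. clique V E K1 \<and> clique V E K2 \<and> clique V E K3 \<and> x \<in> K1 \<and> x \<in> K2 \<and> x \<in> K3
      \<longrightarrow> K1 = K2 \<or> K1 = K3 \<or> K2 = K3)"

definition ginv :: "'a set \<Rightarrow> 'a set set \<Rightarrow> bool" where
  "ginv V E \<longleftrightarrow> (\<forall>e\<in>E. \<exists>x y. e = {x, y} \<and> x \<noteq> y \<and> x \<in> V \<and> y \<in> V) \<and> V \<noteq> {}
     \<and> (\<forall>x\<in>V. \<exists>y. {x, y} \<in> E) \<and> I2 V E"

context ext_setup begin

lemma ext_I0: "\<forall>e\<in>extE E C C' P. \<exists>x y. e = {x, y} \<and> x \<noteq> y \<and> x \<in> V \<union> set P \<and> y \<in> V \<union> set P"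
proof
  fix e assume "e \<in> extE E C C' P"
  then consider "e \<in> E" | "e \<in> path_edges P" | "e \<in> star (hd P) C" | "e \<in> star (last P) C'"
    unfolding extE_def by blast
  then show "\<exists>x y. e = {x, y} \<and> x \<noteq> y \<and> x \<in> V \<union> set P \<and> y \<in> V \<union> set P"
  proof cases
    case 1 then show ?thesis using I0 by blast
  next
    case 2
    then obtain j where j: "Suc j < length P" "e = {P ! j, P ! Suc j}" unfolding path_edges_def by blast
    have "P ! j \<noteq> P ! Suc j" using nthP_eq[of j "Suc j"] j(1) by simp
    moreover have "P ! j \<in> set P" "P ! Suc j \<in> set P" using j(1) by auto
    ultimately show ?thesis using j(2) by blast
  next
    case 3
    then obtain c where c: "c \<in> C" "e = {hd P, c}" unfolding star_def by blast
    have "hd P \<in> set P" using Pne by simp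
    moreover have "c \<in> V" using c C_sub by blast
    ultimately have "hd P \<noteq> c" using Pdisj by blast
    then show ?thesis using c `hd P \<in> set P` `c \<in> V` by blast
  next
    case 4
    then obtain c where c: "c \<in> C'" "e = {last P, c}" unfolding star_def by blast
    have "last P \<in> set P" using Pne by simp
    moreover have "c \<in> V" using c C_sub by blast
    ultimately have "last P \<noteq> c" using Pdisj by blast
    then show ?thesis using c `last P \<in> set P` `c \<in> V` by blast
  qed
qed

lemma ext_I1:
  assumes I1: "\<forall>x\<in>V. \<exists>y. {x, y} \<in> E"
  shows "\<forall>x\<in>V \<union> set P. \<exists>y. {x, y} \<in> extE E C C' P"
proof
  fix x assume "x \<in> V \<union> set P"
  then consider "x \<in> V" | "x \<in> set P" by blast
  then show "\<exists>y. {x, y} \<in> extE E C C' P"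
  proof cases
    case 1 then show ?thesis using I1 EG_sub by blast
  next
    case 2
    then obtain i where i: "i < length P" "x = P ! i" by (metis in_set_conv_nth)
    show ?thesis
    proof (cases "Suc i < length P")
      case True
      then have "{P ! i, P ! Suc i} \<in> path_edges P" unfolding path_edges_def by blast
      then show ?thesis using i(2) by (auto simp: extE_def)
    next
      case False
      then have "Suc (i - 1) < length P" "Suc (i - 1) = i" using i(1) len by auto
      then have "{P ! (i - 1), P ! Suc (i - 1)} \<in> path_edges P" unfolding path_edges_def by blast
      then have "{P ! i, P ! (i - 1)} \<in> path_edges P" using `Suc (i - 1) = i` by (simp add: insert_commute)
      then show ?thesis using i(2) by (auto simp: extE_def)
    qed
  qed
qed

lemma ext_I2:
  assumes IH: "I2 V E"
  shows "I2 (V \<union> set P) (extE E C C' P)"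
  unfolding I2_def
proof (intro allI impI, elim conjE)
  fix x K1 K2 K3
  assume c1: "clique (V \<union> set P) (extE E C C' P) K1" and c2: "clique (V \<union> set P) (extE E C C' P) K2"
    and c3: "clique (V \<union> set P) (extE E C C' P) K3" and x1: "x \<in> K1" and x2: "x \<in> K2" and x3: "x \<in> K3"
  have "x \<in> V \<union> set P" using clique_sub[OF c1] x1 by blast
  then consider "x \<in> V" | "x \<in> set P" by blast
  then show "K1 = K2 \<or> K1 = K3 \<or> K2 = K3"
  proof cases
    case 1
    have xn: "x \<notin> set P" using 1 Pdisj by blast
    have "K1 - set P = K2 - set P \<or> K1 - set P = K3 - set P \<or> K2 - set P = K3 - set P"
      using IH[unfolded I2_def, rule_format, of "K1 - set P" "K2 - set P" "K3 - set P" x]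
        phi_clique[OF c1 1 x1] phi_clique[OF c2 1 x2] phi_clique[OF c3 1 x3] x1 x2 x3 xn
      by blast
    then show ?thesis using phi_inj[OF c1 1 x1 c2 x2] phi_inj[OF c1 1 x1 c3 x3] phi_inj[OF c2 1 x2 c3 x3]
      by blast
  next
    case 2
    then obtain i where i: "i < length P" "x = P ! i" by (metis in_set_conv_nth)
    have "K1 = Lc i \<or> K1 = Rc i" "K2 = Lc i \<or> K2 = Rc i" "K3 = Lc i \<or> K3 = Rc i"
      using cl_P[OF i(1) c1] cl_P[OF i(1) c2] cl_P[OF i(1) c3] x1 x2 x3 i(2) by auto
    then show ?thesis by blast
  qed
qed

end

lemma gate_inv: "gate V E \<Longrightarrow> ginv V E"
proof (induction rule: gate.induct)
  case (cycle n f V E)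
  have c: "cyc n f V E" unfolding cyc_def using cycle.hyps(1,2) by (simp add: cycle.hyps(3))
  interpret cyc n f V E by (rule c)
  have "f 0 \<in> V" using gin n4 by simp
  then have ne: "V \<noteq> {}" by blast
  have i2: "I2 V E" unfolding I2_def
  proof (intro allI impI, elim conjE)
    fix x K1 K2 K3
    assume c1: "clique V E K1" and c2: "clique V E K2" and c3: "clique V E K3"
      and x1: "x \<in> K1" and x2: "x \<in> K2" and x3: "x \<in> K3"
    have "x \<in> V" using clique_sub[OF c1] x1 by blast
    then obtain k where k: "k < n" "x = f k" using Vg by blast
    obtain g where g: "cyc n g V E" "g (n - 1) = f k" using rotate[OF c k(1)] by blast
    have "K1 = {g (n - 2), g (n - 1)} \<or> K1 = {g (n - 1), g 0}"
      "K2 = {g (n - 2), g (n - 1)} \<or> K2 = {g (n - 1), g 0}"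
      "K3 = {g (n - 2), g (n - 1)} \<or> K3 = {g (n - 1), g 0}"
      using cyc.cyc_clique[OF g(1) c1] cyc.cyc_clique[OF g(1) c2] cyc.cyc_clique[OF g(1) c3]
        x1 x2 x3 unfolding k(2) g(2)[symmetric] by blast+
    then show "K1 = K2 \<or> K1 = K3 \<or> K2 = K3" by blast
  qed
  have "\<forall>x\<in>V. \<exists>y. {x, y} \<in> E" using cyc_I1 by blast
  then show ?case unfolding ginv_def using cyc_I0 ne i2 by (intro conjI)
next
  case (extend V E C C' P)
  have g: "(\<forall>e\<in>E. \<exists>x y. e = {x, y} \<and> x \<noteq> y \<and> x \<in> V \<and> y \<in> V)" "V \<noteq> {}"
    using extend.IH unfolding ginv_def by blast+
  have es: "ext_setup V E C C' P"
    unfolding ext_setup_def using g extend.hyps(2-7) by (intro conjI)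
  interpret ext_setup V E C C' P by (rule es)
  have h: "I2 V E" "\<forall>x\<in>V. \<exists>y. {x, y} \<in> E" using extend.IH unfolding ginv_def by blast+
  have "V \<union> set P \<noteq> {}" using Vne by blast
  moreover have eq: "E \<union> path_edges P \<union> {{hd P, c} |c. c \<in> C} \<union> {{last P, c} |c. c \<in> C'} = extE E C C' P"
    by (simp add: extE_def star_def)
  ultimately show ?case unfolding ginv_def eq using ext_I0 ext_I1[OF h(2)] ext_I2[OF h(1)] by (intro conjI)
qed

locale repl_setup =
  fixes V :: "'a set" and E v D1 D2 W
  assumes I0: "\<forall>e\<in>E. \<exists>x y. e = {x,y} \<and> x \<noteq> y \<and> x \<in> V \<and> y \<in> V"
   and Vne: "V \<noteq> {}" and vV: "v \<in> V"
   and clD1: "clique V E D1" and clD2: "clique V E D2" and D12: "D1 \<inter> D2 = {v}"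
   and lenW: "length W \<ge> 2" and distW: "distinct W" and Wdisj: "set W \<inter> V = {}"
begin

lemma edgeE_V: "{x, y} \<in> E \<Longrightarrow> x \<in> V \<and> y \<in> V"
  using I0 by (metis doubleton_eq_iff insertI1 insert_commute)

lemma Wne: "W \<noteq> []" using lenW by auto

lemma hdW: "hd W \<in> set W" "last W \<in> set W" using Wne by auto

lemma hd_last: "hd W \<noteq> last W"
proof
  assume a: "hd W = last W"
  have "hd W = W ! 0" "last W = W ! (length W - 1)" using Wne by (auto simp: hd_conv_nth last_conv_nth)
  then have "W ! 0 = W ! (length W - 1)" using a by simp
  moreover have "0 < length W" "length W - 1 < length W" using lenW by auto
  ultimately have "(0::nat) = length W - 1" using nth_eq_iff_index_eq[OF distW] by blast
  then show False using lenW by simp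
qed

lemma D_sub: "D1 \<subseteq> V" "D2 \<subseteq> V" using clD1 clD2 clique_sub by auto

lemma repl_rev: "repl_setup V E v D2 D1 (rev W)"
  using I0 Vne vV clD1 clD2 D12 lenW distW Wdisj unfolding repl_setup_def by (simp add: Int_commute)

lemma rnbr_V:
  assumes x: "x \<in> V" and e: "{x, u} \<in> replE E v D1 D2 W"
  shows "({x, u} \<in> E \<and> u \<in> V \<and> x \<noteq> v \<and> u \<noteq> v) \<or> (x \<in> D1 \<and> x \<noteq> v \<and> u = hd W) \<or> (x \<in> D2 \<and> x \<noteq> v \<and> u = last W)"
proof -
  have xW: "x \<notin> set W" using x Wdisj by blast
  consider "{x, u} \<in> del_edges E v" | "{x, u} \<in> path_edges W" | "{x, u} \<in> star (hd W) (D1 - {v})"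
    | "{x, u} \<in> star (last W) (D2 - {v})" using e unfolding replE_def by blast
  then show ?thesis
  proof cases
    case 1 then show ?thesis using edgeE_V unfolding del_edges_def by blast
  next
    case 2 then show ?thesis using path_edges_subset xW by blast
  next
    case 3
    then obtain c where c: "c \<in> D1 - {v}" "{x, u} = {hd W, c}" unfolding star_def by blast
    then show ?thesis using hdW xW by (auto simp: doubleton_eq_iff)
  next
    case 4
    then obtain c where c: "c \<in> D2 - {v}" "{x, u} = {last W, c}" unfolding star_def by blast
    then show ?thesis using hdW xW by (auto simp: doubleton_eq_iff)
  qed
qed

lemma rnbr_W:
  assumes w: "w \<in> set W" and u: "u \<in> V" and e: "{w, u} \<in> replE E v D1 D2 W"
  shows "(w = hd W \<and> u \<in> D1 - {v}) \<or> (w = last W \<and> u \<in> D2 - {v})"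
proof -
  have wV: "w \<notin> V" using w Wdisj by blast
  have "{u, w} \<in> replE E v D1 D2 W" using e by (simp add: insert_commute)
  from rnbr_V[OF u this] show ?thesis using wV by blast
qed

lemma r_persist:
  assumes K: "clique V E K" and vK: "v \<notin> K"
  shows "clique ((V - {v}) \<union> set W) (replE E v D1 D2 W) K"
proof -
  have KV: "K \<subseteq> V" using clique_sub[OF K] .
  have cs: "complete_set ((V - {v}) \<union> set W) (replE E v D1 D2 W) K"
    unfolding complete_set_def
  proof (intro conjI ballI impI)
    show "K \<subseteq> (V - {v}) \<union> set W" using KV vK by blast
    fix x y assume xy: "x \<in> K" "y \<in> K" "x \<noteq> y"
    have "{x, y} \<in> E" using clique_compl[OF K xy] .
    moreover have "v \<notin> {x, y}" using xy vK by auto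
    ultimately have "{x, y} \<in> del_edges E v" unfolding del_edges_def by blast
    then show "{x, y} \<in> replE E v D1 D2 W" unfolding replE_def by blast
  qed
  have Kne: "K \<noteq> {}" using clique_nonempty[OF K Vne] .
  have mx: "K' = K" if K': "complete_set ((V - {v}) \<union> set W) (replE E v D1 D2 W) K'" and sub: "K \<subseteq> K'" for K'
  proof -
    have noW: "u \<notin> set W" if u: "u \<in> K'" for u
    proof
      assume uW: "u \<in> set W"
      have adj: "(u = hd W \<and> k \<in> D1 - {v}) \<or> (u = last W \<and> k \<in> D2 - {v})" if k: "k \<in> K" for k
      proof -
        have "k \<noteq> u" using k KV uW Wdisj by blast
        then have "{u, k} \<in> replE E v D1 D2 W" using complete_edge[OF K' u] sub k by blast
        then show ?thesis using rnbr_W[OF uW] k KV by blast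
      qed
      show False
      proof (cases "u = hd W")
        case True
        then have "K \<subseteq> D1" using adj hd_last by blast
        then have "D1 = K" using clique_max[OF K] clD1 unfolding clique_def by blast
        then show False using D12 vK by blast
      next
        case False
        then have "K \<subseteq> D2" using adj by blast
        then have "D2 = K" using clique_max[OF K] clD2 unfolding clique_def by blast
        then show False using D12 vK by blast
      qed
    qed
    have K'V: "K' \<subseteq> V" using noW K' unfolding complete_set_def by blast
    have "complete_set V E K'"
      unfolding complete_set_def
    proof (intro conjI ballI impI)
      show "K' \<subseteq> V" by (rule K'V)
      fix x y assume xy: "x \<in> K'" "y \<in> K'" "x \<noteq> y"
      have e: "{x, y} \<in> replE E v D1 D2 W" using complete_edge[OF K' xy] .
      have "y \<notin> set W" using noW xy by blast
      then show "{x, y} \<in> E" using rnbr_V[OF _ e] K'V xy hdW by blast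
    qed
    then show ?thesis using clique_max[OF K] sub by blast
  qed
  show ?thesis using cs mx unfolding clique_def by blast
qed

lemma r_new:
  assumes ne: "D1 - {v} \<noteq> {}"
  shows "clique ((V - {v}) \<union> set W) (replE E v D1 D2 W) (insert (hd W) (D1 - {v}))"
proof -
  let ?S = "insert (hd W) (D1 - {v})"
  have cs: "complete_set ((V - {v}) \<union> set W) (replE E v D1 D2 W) ?S"
    unfolding complete_set_def
  proof (intro conjI ballI impI)
    show "?S \<subseteq> (V - {v}) \<union> set W" using D_sub hdW by blast
    fix x y assume xy: "x \<in> ?S" "y \<in> ?S" "x \<noteq> y"
    have st: "{hd W, c} \<in> replE E v D1 D2 W" if "c \<in> D1 - {v}" for c
      using that unfolding replE_def star_def by blast
    show "{x, y} \<in> replE E v D1 D2 W"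
    proof (cases "x = hd W")
      case True then show ?thesis using xy st by blast
    next
      case False
      note xF = False
      show ?thesis
      proof (cases "y = hd W")
        case True then show ?thesis using xy st xF by (auto simp: insert_commute)
      next
        case False
        then have "x \<in> D1 - {v}" "y \<in> D1 - {v}" using xy xF by auto
        then have "{x, y} \<in> E" "v \<notin> {x, y}" using clique_compl[OF clD1] xy(3) by auto
        then have "{x, y} \<in> del_edges E v" unfolding del_edges_def by blast
        then show ?thesis unfolding replE_def by blast
      qed
    qed
  qed
  obtain c where c: "c \<in> D1 - {v}" using ne by blast
  have cV: "c \<in> V" using c D_sub by blast
  have mx: "K' = ?S" if K': "complete_set ((V - {v}) \<union> set W) (replE E v D1 D2 W) K'" and sub: "?S \<subseteq> K'" for K'
  proof (rule ccontr)
    assume "K' \<noteq> ?S"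
    then have "\<not> K' \<subseteq> ?S" using sub by (metis subset_antisym)
    then obtain u where u: "u \<in> K'" "u \<notin> ?S" by (auto simp: subset_iff)
    have uV: "u \<in> (V - {v}) \<union> set W" using u K' unfolding complete_set_def by blast
    have h: "hd W \<in> K'" using sub by blast
    have "u \<noteq> hd W" using u by blast
    then have e1: "{hd W, u} \<in> replE E v D1 D2 W" using complete_edge[OF K' h u(1)] by simp
    show False
    proof (cases "u \<in> V")
      case True
      from rnbr_W[OF hdW(1) True e1] show False using hd_last u(2) by blast
    next
      case False
      then have uW: "u \<in> set W" using uV by blast
      have "c \<in> K'" using sub c by blast
      moreover have "c \<noteq> u" using cV False by blast
      ultimately have "{u, c} \<in> replE E v D1 D2 W" using complete_edge[OF K' u(1)] by blast
      from rnbr_W[OF uW cV this] show False using u(2) c D12 by blast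
    qed
  qed
  show ?thesis using cs mx unfolding clique_def by blast
qed

lemma r_new2:
  assumes ne: "D2 - {v} \<noteq> {}"
  shows "clique ((V - {v}) \<union> set W) (replE E v D1 D2 W) (insert (last W) (D2 - {v}))"
  using repl_setup.r_new[OF repl_rev ne] by (simp add: replE_rev hd_rev)

end

context cyc begin

lemma cyc_new:
  assumes lW: "length W \<ge> 2" and dW: "distinct W" and dV: "set W \<inter> V = {}"
  shows "gate ((V - {g (n - 1)}) \<union> set W)
    (replE E (g (n - 1)) {g (n - 2), g (n - 1)} {g (n - 1), g 0} W)"
proof -
  define t where "t = length W"
  define m where "m = n - 1 + t"
  define h where "h i = (if i < n - 1 then g i else W ! (i - (n - 1)))" for i
  let ?v = "g (n - 1)"
  have t2: "t \<ge> 2" using lW t_def by simp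
  have m4: "m \<ge> 4" using n4 t2 m_def by simp
  have hlo: "h i = g i" if "i < n - 1" for i using that h_def by simp
  have hhi: "h i = W ! (i - (n - 1))" if "n - 1 \<le> i" for i using that h_def by simp
  have Wne: "W \<noteq> []" using lW by auto
  have hdW: "hd W = W ! 0" using Wne by (simp add: hd_conv_nth)
  have lastW: "last W = W ! (t - 1)" using Wne t_def by (simp add: last_conv_nth)
  have gnv: "g i \<noteq> ?v" if "i < n - 1" for i using ginj[of i "n - 1"] that n4 by auto
  have Wnotg: "W ! j \<noteq> g i" if "j < t" "i < n" for i j
  proof -
    have "W ! j \<in> set W" using that(1) t_def by simp
    moreover have "g i \<in> V" using gin[OF that(2)] .
    ultimately show ?thesis using dV by auto
  qed
  have inj: "inj_on h {..<m}"
  proof (rule inj_onI)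
    fix i j assume i: "i \<in> {..<m}" and j: "j \<in> {..<m}" and e: "h i = h j"
    show "i = j"
    proof (cases "i < n - 1")
      case True note iT = True
      show ?thesis
      proof (cases "j < n - 1")
        case True then show ?thesis using e iT hlo ginj[of i j] by simp
      next
        case False
        have "j - (n - 1) < t" using j False m_def by auto
        moreover have "i < n" using iT by simp
        ultimately have "W ! (j - (n - 1)) \<noteq> g i" using Wnotg by blast
        moreover have "h i = g i" "h j = W ! (j - (n - 1))" using iT False hlo hhi by auto
        ultimately show ?thesis using e by simp
      qed
    next
      case False note iF = False
      show ?thesis
      proof (cases "j < n - 1")
        case True
        have "i - (n - 1) < t" using i iF m_def by auto
        moreover have "j < n" using True by simp
        ultimately have "W ! (i - (n - 1)) \<noteq> g j" using Wnotg by blast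
        moreover have "h j = g j" "h i = W ! (i - (n - 1))" using iF True hlo hhi by auto
        ultimately show ?thesis using e by simp
      next
        case False
        have "i - (n - 1) < t" "j - (n - 1) < t" using i j iF False m_def by auto
        moreover have "W ! (i - (n - 1)) = W ! (j - (n - 1))" using e iF False hhi by simp
        ultimately have "i - (n - 1) = j - (n - 1)" using nth_eq_iff_index_eq[OF dW] t_def by blast
        then show ?thesis using iF False by simp
      qed
    qed
  qed
  have img: "h ` {..<m} = (V - {?v}) \<union> set W"
  proof (rule set_eqI, rule iffI)
    fix x assume "x \<in> h ` {..<m}"
    then obtain i where i: "i < m" "x = h i" by blast
    show "x \<in> (V - {?v}) \<union> set W"
    proof (cases "i < n - 1")
      case True then show ?thesis using i hlo gin gnv by auto
    next
      case False
      then have "i - (n - 1) < t" using i m_def by auto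
      then show ?thesis using i False hhi t_def by auto
    qed
  next
    fix x assume x: "x \<in> (V - {?v}) \<union> set W"
    show "x \<in> h ` {..<m}"
    proof (cases "x \<in> set W")
      case True
      then obtain j where j: "j < t" "x = W ! j" using t_def by (metis in_set_conv_nth)
      have "h (n - 1 + j) = x" using hhi[of "n - 1 + j"] j by simp
      moreover have "n - 1 + j < m" using j m_def by simp
      ultimately show ?thesis by force
    next
      case False
      then have "x \<in> V" "x \<noteq> ?v" using x by auto
      then obtain i where i: "i < n" "x = g i" using Vg by blast
      then have "i \<noteq> n - 1" using `x \<noteq> ?v` by auto
      then have "i < n - 1" using i by simp
      then have "h i = x" "i < m" using hlo i m_def by auto
      then show ?thesis by force
    qed
  qed
  have "n - 2 < n - 1" "0 < n - 1" using n4 by auto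
  then have gg: "g (n - 2) \<noteq> ?v" "g 0 \<noteq> ?v" using gnv by auto
  have A: "{g (n - 2), ?v} - {?v} = {g (n - 2)}" using gg by auto
  have B: "{?v, g 0} - {?v} = {g 0}" using gg by auto
  have R: "replE E ?v {g (n - 2), ?v} {?v, g 0} W
     = del_edges E ?v \<union> path_edges W \<union> {{hd W, g (n - 2)}} \<union> {{last W, g 0}}"
    unfolding replE_def A B by simp
  have edges: "{{h i, h (Suc i mod m)} | i. i < m} = replE E ?v {g (n - 2), ?v} {?v, g 0} W"
    unfolding R
  proof (rule set_eqI, rule iffI)
    fix e assume "e \<in> {{h i, h (Suc i mod m)} | i. i < m}"
    then obtain i where i: "i < m" "e = {h i, h (Suc i mod m)}" by blast
    consider "i < n - 2" | "i = n - 2" | "n - 1 \<le> i" "Suc i < m" | "Suc i = m" using i(1) by linarith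
    then show "e \<in> del_edges E ?v \<union> path_edges W \<union> {{hd W, g (n - 2)}} \<union> {{last W, g 0}}"
    proof cases
      case 1
      have s: "Suc i mod m = Suc i" "Suc i mod n = Suc i" using 1 m_def n4 t2 by auto
      have e: "e = {g i, g (Suc i)}" using i(2) s hlo[of i] hlo[of "Suc i"] 1 by simp
      have "e \<in> E" unfolding memE using 1 s e by (intro exI[of _ i]) simp
      moreover have "i < n - 1" "Suc i < n - 1" using 1 by linarith+
      then have "g i \<noteq> ?v" "g (Suc i) \<noteq> ?v" using gnv by blast+
      then have "?v \<notin> e" using e by auto
      ultimately show ?thesis unfolding del_edges_def by blast
    next
      case 2
      have s: "Suc i mod m = n - 1" using 2 m_def n4 t2 by auto
      have "e = {g (n - 2), W ! 0}" using i(2) s hlo[of i] hhi[of "n - 1"] 2 n4 by simp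
      then have "e = {hd W, g (n - 2)}" using hdW by (simp add: insert_commute)
      then show ?thesis by blast
    next
      case 3
      have s: "Suc i mod m = Suc i" using 3 by simp
      have j: "Suc (i - (n - 1)) < t" using 3 m_def by auto
      have "e = {W ! (i - (n - 1)), W ! Suc (i - (n - 1))}"
        using i(2) s hhi[of i] hhi[of "Suc i"] 3 Suc_diff_le by simp
      then have "e \<in> path_edges W" unfolding path_edges_def using j t_def by blast
      then show ?thesis by blast
    next
      case 4
      have s: "Suc i mod m = 0" using 4 by simp
      have "i - (n - 1) = t - 1" using 4 m_def t2 by simp
      then have "e = {W ! (t - 1), g 0}" using i(2) s hhi[of i] hlo[of 0] 4 m_def n4 t2 by simp
      then have "e = {last W, g 0}" using lastW by simp
      then show ?thesis by blast
    qed
  next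
    fix e assume "e \<in> del_edges E ?v \<union> path_edges W \<union> {{hd W, g (n - 2)}} \<union> {{last W, g 0}}"
    then consider "e \<in> del_edges E ?v" | "e \<in> path_edges W" | "e = {hd W, g (n - 2)}" | "e = {last W, g 0}"
      by blast
    then show "e \<in> {{h i, h (Suc i mod m)} | i. i < m}"
    proof cases
      case 1
      then have eE: "e \<in> E" "?v \<notin> e" unfolding del_edges_def by auto
      then obtain j where j: "j < n" "e = {g j, g (Suc j mod n)}" using memE by blast
      have "j \<noteq> n - 1" using eE(2) j by auto
      moreover have "j \<noteq> n - 2"
      proof
        assume "j = n - 2"
        then have "Suc j mod n = n - 1" using n4 by simp
        then show False using eE(2) j by auto
      qed
      ultimately have jl: "j < n - 2" using j(1) by linarith
      have s: "Suc j mod m = Suc j" "Suc j mod n = Suc j" using jl m_def n4 t2 by auto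
      have "e = {h j, h (Suc j mod m)}" using j(2) s hlo[of j] hlo[of "Suc j"] jl by simp
      moreover have "j < m" using jl m_def by simp
      ultimately show ?thesis by blast
    next
      case 2
      then obtain j where j: "Suc j < t" "e = {W ! j, W ! Suc j}" unfolding path_edges_def t_def by blast
      define i where "i = n - 1 + j"
      have s: "Suc i mod m = Suc i" "Suc i < m" using j i_def m_def by auto
      have "h i = W ! j" "h (Suc i) = W ! Suc j" using hhi i_def by auto
      then have "e = {h i, h (Suc i mod m)}" using j(2) s by simp
      moreover have "i < m" using s by simp
      ultimately show ?thesis by blast
    next
      case 3
      have s: "Suc (n - 2) mod m = n - 1" "n - 2 < m" using m_def n4 t2 by auto
      have "h (n - 2) = g (n - 2)" "h (n - 1) = W ! 0" using hlo hhi n4 by auto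
      then have "e = {h (n - 2), h (Suc (n - 2) mod m)}" using 3 s hdW by (simp add: insert_commute)
      then show ?thesis using s(2) by blast
    next
      case 4
      have s: "Suc (m - 1) mod m = 0" "m - 1 < m" using m4 by auto
      have "h (m - 1) = W ! (t - 1)" using hhi[of "m - 1"] m_def t2 by simp
      moreover have "h 0 = g 0" using hlo n4 by simp
      ultimately have "e = {h (m - 1), h (Suc (m - 1) mod m)}" using 4 s lastW by simp
      then show ?thesis using s(2) by blast
    qed
  qed
  have "bij_betw h {..<m} ((V - {?v}) \<union> set W)" using inj img by (simp add: bij_betw_def)
  from gate.cycle[OF m4 this edges[symmetric]] show ?thesis .
qed

end

lemma del_edges_triv: "(\<forall>e\<in>E. v \<notin> e) \<Longrightarrow> del_edges E v = E"
  unfolding del_edges_def by blast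

context ext_setup begin

lemma vnotE: assumes "v \<notin> V" shows "del_edges E v = E"
proof (intro del_edges_triv ballI)
  fix e assume "e \<in> E"
  then obtain x y where "e = {x, y}" "x \<in> V" "y \<in> V" using I0 by blast
  then show "v \<notin> e" using assms by auto
qed

lemma caseA:
  assumes hG: "gate V E" and i: "i < length P"
    and lW: "length W \<ge> 2" and dW: "distinct W" and dWV: "set W \<inter> (V \<union> set P) = {}"
  shows "gate (((V \<union> set P) - {P ! i}) \<union> set W) (replE (extE E C C' P) (P ! i) (Lc i) (Rc i) W)"
proof -
  define v where "v = P ! i"
  define xs where "xs = take i P"
  define ys where "ys = drop (Suc i) P"
  have Pdec: "P = xs @ v # ys" unfolding xs_def ys_def v_def using i by (simp add: id_take_nth_drop)
  have dP: "distinct (xs @ v # ys)" using dist Pdec by simp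
  have vV: "v \<notin> V" using nthP_notV[OF i] v_def by simp
  define P' where "P' = xs @ W @ ys"
  have sP: "set P = set xs \<union> {v} \<union> set ys" using arg_cong[OF Pdec, of set] by auto
  have dP': "distinct P'" unfolding P'_def using dP dW dWV sP by auto
  have lP': "length P' \<ge> 2" unfolding P'_def using lW by simp
  have vP': "set P' \<inter> V = {}" unfolding P'_def using Pdisj dWV sP by auto
  have g: "gate (V \<union> set P') (extE E C C' P')" using gate_ext[OF hG clC clC' disj lP' dP' vP'] .
  have vert: "V \<union> set P' = ((V \<union> set P) - {v}) \<union> set W"
    unfolding P'_def using sP dP vV by auto
  have Wne: "W \<noteq> []" using lW by auto
  have vC: "v \<notin> C" "v \<notin> C'" using vV C_sub by auto
  have hdPv: "hd P = v \<longleftrightarrow> xs = []"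
  proof
    assume "hd P = v"
    then show "xs = []" using Pdec dP by (cases xs) auto
  qed (simp add: Pdec)
  have lastPv: "last P = v \<longleftrightarrow> ys = []"
  proof
    assume "last P = v"
    then show "ys = []" using Pdec dP by (cases ys rule: rev_cases) auto
  qed (simp add: Pdec)
  have hdxs: "xs \<noteq> [] \<Longrightarrow> hd P = hd xs" using Pdec by simp
  have lastys: "ys \<noteq> [] \<Longrightarrow> last P = last ys" using Pdec by simp
  have xs0: "xs = [] \<longleftrightarrow> i = 0" unfolding xs_def using i by auto
  have ys0: "ys = [] \<longleftrightarrow> Suc i = length P" unfolding ys_def using i by auto
  have lastxs: "xs \<noteq> [] \<Longrightarrow> last xs = P ! (i - 1)"
    unfolding xs_def using i by (simp add: last_conv_nth)
  have hdys: "ys \<noteq> [] \<Longrightarrow> hd ys = P ! Suc i"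
    unfolding ys_def using i by (simp add: hd_drop_conv_nth)
  have Lm: "Lc i - {v} = (if xs = [] then C else {last xs})"
  proof (cases "xs = []")
    case True then show ?thesis using xs0 vC unfolding Lc_def v_def by auto
  next
    case False
    then have "i \<noteq> 0" "P ! (i - 1) \<noteq> v" using xs0 nthP_eq[of "i - 1" i] i unfolding v_def by auto
    then show ?thesis using False lastxs unfolding Lc_def v_def by auto
  qed
  have Rm: "Rc i - {v} = (if ys = [] then C' else {hd ys})"
  proof (cases "ys = []")
    case True then show ?thesis using ys0 vC unfolding Rc_def v_def by auto
  next
    case False
    then have "Suc i \<noteq> length P" "Suc i < length P" using ys0 i by auto
    then have "P ! Suc i \<noteq> v" using nthP_eq[of "Suc i" i] i unfolding v_def by auto
    then show ?thesis using False hdys `Suc i \<noteq> length P` unfolding Rc_def v_def by auto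
  qed
  have L: "replE (extE E C C' P) v (Lc i) (Rc i) W =
      E \<union> (path_edges xs \<union> path_edges ys)
      \<union> (if xs = [] then {} else star (hd P) C) \<union> (if ys = [] then {} else star (last P) C')
      \<union> path_edges W \<union> star (hd W) (if xs = [] then C else {last xs})
      \<union> star (last W) (if ys = [] then C' else {hd ys})"
  proof -
    have a: "del_edges (path_edges P) v = path_edges xs \<union> path_edges ys"
      using del_edges_path_mid[OF dP] Pdec by simp
    have b: "del_edges (star (hd P) C) v = (if xs = [] then {} else star (hd P) C)"
      using hdPv vC by auto
    have c: "del_edges (star (last P) C') v = (if ys = [] then {} else star (last P) C')"
      using lastPv vC by auto
    show ?thesis unfolding replE_def extE_def del_edges_Un vnotE[OF vV] a b c Lm Rm by (rule refl)
  qed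
  have R: "extE E C C' P' = E \<union> (path_edges xs \<union> (path_edges W \<union> path_edges ys
        \<union> (if ys = [] then {} else {{last W, hd ys}})) \<union> (if xs = [] then {} else {{last xs, hd W}}))
      \<union> star (if xs = [] then hd W else hd P) C \<union> star (if ys = [] then last W else last P) C'"
  proof -
    have "path_edges P' = path_edges xs \<union> (path_edges W \<union> path_edges ys
        \<union> (if ys = [] then {} else {{last W, hd ys}})) \<union> (if xs = [] then {} else {{last xs, hd W}})"
      unfolding P'_def path_edges_append[of xs "W @ ys"] path_edges_append[of W ys] using Wne by simp
    moreover have "hd P' = (if xs = [] then hd W else hd P)" unfolding P'_def using Wne hdxs by simp
    moreover have "last P' = (if ys = [] then last W else last P)" unfolding P'_def using Wne lastys by simp
    ultimately show ?thesis unfolding extE_def by simp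
  qed
  have edges: "replE (extE E C C' P) v (Lc i) (Rc i) W = extE E C C' P'"
  proof (cases "xs = []")
    case True note xT = True
    show ?thesis
    proof (cases "ys = []")
      case True
      then show ?thesis using xT Pdec lP' len by simp
    next
      case False
      show ?thesis unfolding L R using xT False by (simp add: Un_ac insert_commute)
    qed
  next
    case False note xF = False
    show ?thesis
    proof (cases "ys = []")
      case True
      show ?thesis unfolding L R using xF True by (simp add: Un_ac insert_commute)
    next
      case False
      show ?thesis unfolding L R using xF False by (simp add: Un_ac insert_commute)
    qed
  qed
  show ?thesis using g unfolding vert edges[symmetric] v_def .
qed

end

definition IHP :: "'a set \<Rightarrow> 'a set set \<Rightarrow> bool" where
  "IHP V E \<longleftrightarrow> (\<forall>v C1 C2 W. v \<in> V \<and> clique V E C1 \<and> clique V E C2 \<and> C1 \<inter> C2 = {v}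
     \<and> 2 \<le> length W \<and> distinct W \<and> set W \<inter> V = {} \<longrightarrow> gate ((V - {v}) \<union> set W) (replE E v C1 C2 W))"

context ext_setup begin

lemma edge_neq: assumes "{x, y} \<in> E" shows "x \<noteq> y"
proof
  assume xy: "x = y"
  obtain a b where ab: "{x, y} = {a, b}" "a \<noteq> b" using I0 assms by blast
  have "a \<in> {x}" "b \<in> {x}" using ab(1) xy by (metis insertI1 insert_absorb2, metis insertCI insert_absorb2)
  then show False using ab(2) by simp
qed

lemma rs_intro: "v \<in> V \<Longrightarrow> clique V E D1 \<Longrightarrow> clique V E D2 \<Longrightarrow> D1 \<inter> D2 = {v} \<Longrightarrow>
   length W \<ge> 2 \<Longrightarrow> distinct W \<Longrightarrow> set W \<inter> V = {} \<Longrightarrow> repl_setup V E v D1 D2 W"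
  unfolding repl_setup_def using I0 Vne by blast

lemma caseB1:
  assumes hG: "gate V E" and IH: "IHP V E" and vV: "v \<in> V" and vC: "v \<notin> C" "v \<notin> C'"
    and cl1: "clique V E C1" and cl2: "clique V E C2" and C12: "C1 \<inter> C2 = {v}"
    and lW: "length W \<ge> 2" and dW: "distinct W" and dWV: "set W \<inter> (V \<union> set P) = {}"
  shows "gate (((V \<union> set P) - {v}) \<union> set W) (replE (extE E C C' P) v C1 C2 W)"
proof -
  have WV: "set W \<inter> V = {}" using dWV by blast
  have gH': "gate ((V - {v}) \<union> set W) (replE E v C1 C2 W)"
    using IH vV cl1 cl2 C12 lW dW WV unfolding IHP_def by blast
  have rs: "repl_setup V E v C1 C2 W" using rs_intro[OF vV cl1 cl2 C12 lW dW WV] .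
  have c1: "clique ((V - {v}) \<union> set W) (replE E v C1 C2 W) C" using repl_setup.r_persist[OF rs clC vC(1)] .
  have c2: "clique ((V - {v}) \<union> set W) (replE E v C1 C2 W) C'" using repl_setup.r_persist[OF rs clC' vC(2)] .
  have P': "set P \<inter> ((V - {v}) \<union> set W) = {}" using Pdisj dWV by blast
  have g: "gate (((V - {v}) \<union> set W) \<union> set P) (extE (replE E v C1 C2 W) C C' P)"
    using gate_ext[OF gH' c1 c2 disj len dist P'] .
  have vP: "v \<notin> set P" using vV Pdisj by blast
  have vert: "((V - {v}) \<union> set W) \<union> set P = ((V \<union> set P) - {v}) \<union> set W" using vP by blast
  have hv: "hd P \<noteq> v" "last P \<noteq> v" using vP Pne by auto
  have Cv: "C - {v} = C" "C' - {v} = C'" using vC by auto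
  have edges: "replE (extE E C C' P) v C1 C2 W = extE (replE E v C1 C2 W) C C' P"
    unfolding replE_def extE_def del_edges_Un del_edges_path_notin[OF vP] del_edges_star
    using hv Cv by (simp add: Un_ac)
  show ?thesis using g unfolding vert edges .
qed

lemma caseB2:
  assumes hG: "gate V E" and IH: "IHP V E" and I1H: "\<forall>x\<in>V. \<exists>y. {x, y} \<in> E"
    and vC: "v \<in> C" and cl2: "clique V E C2" and C12: "C \<inter> C2 = {v}"
    and lW: "length W \<ge> 2" and dW: "distinct W" and dWV: "set W \<inter> (V \<union> set P) = {}"
  shows "gate (((V \<union> set P) - {v}) \<union> set W) (replE (extE E C C' P) v (insert (hd P) C) C2 W)"
proof -
  have vV: "v \<in> V" using vC C_sub by blast
  have vC': "v \<notin> C'" using vC disj by blast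
  have WV: "set W \<inter> V = {}" using dWV by blast
  obtain y where y: "{v, y} \<in> E" using I1H vV by blast
  have yV: "y \<in> V" using edgeE_V[OF y] by blast
  have yv: "y \<noteq> v" using edge_neq[OF y] by blast
  have ne: "C - {v} \<noteq> {}" using clique_two[OF clC vC y yV yv] .
  have gH': "gate ((V - {v}) \<union> set W) (replE E v C C2 W)"
    using IH vV clC cl2 C12 lW dW WV unfolding IHP_def by blast
  have rs: "repl_setup V E v C C2 W" using rs_intro[OF vV clC cl2 C12 lW dW WV] .
  have c1: "clique ((V - {v}) \<union> set W) (replE E v C C2 W) (insert (hd W) (C - {v}))"
    using repl_setup.r_new[OF rs ne] .
  have c2: "clique ((V - {v}) \<union> set W) (replE E v C C2 W) C'" using repl_setup.r_persist[OF rs clC' vC'] .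
  have hW: "hd W \<in> set W" using lW by (cases W) auto
  have dj: "insert (hd W) (C - {v}) \<inter> C' = {}" using hW WV disj C_sub by blast
  have P': "set P \<inter> ((V - {v}) \<union> set W) = {}" using Pdisj dWV by blast
  have g: "gate (((V - {v}) \<union> set W) \<union> set P) (extE (replE E v C C2 W) (insert (hd W) (C - {v})) C' P)"
    using gate_ext[OF gH' c1 c2 dj len dist P'] .
  have vP: "v \<notin> set P" using vV Pdisj by blast
  have vert: "((V - {v}) \<union> set W) \<union> set P = ((V \<union> set P) - {v}) \<union> set W" using vP by blast
  have hv: "hd P \<noteq> v" "last P \<noteq> v" using vP Pne by auto
  have Cv: "C' - {v} = C'" "insert (hd P) C - {v} = insert (hd P) (C - {v})" using vC' hv by auto
  have edges: "replE (extE E C C' P) v (insert (hd P) C) C2 W = extE (replE E v C C2 W) (insert (hd W) (C - {v})) C' P"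
    unfolding replE_def extE_def del_edges_Un del_edges_path_notin[OF vP] del_edges_star
    using hv Cv by (simp add: Un_ac insert_commute)
  show ?thesis using g unfolding vert edges .
qed

end

context ext_setup begin

lemma Lc_ne: assumes i: "i < length P" shows "Lc i \<noteq> {P ! i}"
proof (cases "i = 0")
  case True
  obtain c where c: "c \<in> C" using Cne by blast
  have "c \<noteq> P ! i" using c C_sub nthP_notV[OF i] by blast
  then show ?thesis using c True unfolding Lc_def by auto
next
  case False
  have "P ! (i - 1) \<noteq> P ! i" using nthP_eq[of "i - 1" i] i False by auto
  then show ?thesis using False unfolding Lc_def by auto
qed

lemma Rc_ne: assumes i: "i < length P" shows "Rc i \<noteq> {P ! i}"
proof (cases "Suc i = length P")
  case True
  obtain c where c: "c \<in> C'" using Cne by blast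
  have "c \<noteq> P ! i" using c C_sub nthP_notV[OF i] by blast
  then show ?thesis using c True unfolding Rc_def by auto
next
  case False
  then have "Suc i < length P" using i by simp
  then have "P ! Suc i \<noteq> P ! i" using nthP_eq[of "Suc i" i] i by auto
  then show ?thesis using False unfolding Rc_def by auto
qed

lemma stepP:
  assumes hG: "gate V E" and i: "i < length P"
    and cl1: "clique (V \<union> set P) (extE E C C' P) C1" and cl2: "clique (V \<union> set P) (extE E C C' P) C2"
    and C12: "C1 \<inter> C2 = {P ! i}"
    and lW: "length W \<ge> 2" and dW: "distinct W" and dWV: "set W \<inter> (V \<union> set P) = {}"
  shows "gate (((V \<union> set P) - {P ! i}) \<union> set W) (replE (extE E C C' P) (P ! i) C1 C2 W)"
proof -
  have p1: "P ! i \<in> C1" "P ! i \<in> C2" using C12 by auto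
  have h1: "C1 = Lc i \<or> C1 = Rc i" using cl_P[OF i cl1 p1(1)] .
  have h2: "C2 = Lc i \<or> C2 = Rc i" using cl_P[OF i cl2 p1(2)] .
  have "C1 \<noteq> C2"
  proof
    assume "C1 = C2"
    then have "C1 = {P ! i}" using C12 by simp
    then show False using h1 Lc_ne[OF i] Rc_ne[OF i] by auto
  qed
  then consider "C1 = Lc i" "C2 = Rc i" | "C1 = Rc i" "C2 = Lc i" using h1 h2 by blast
  then show ?thesis
  proof cases
    case 1 then show ?thesis using caseA[OF hG i lW dW dWV] by simp
  next
    case 2
    have "gate (((V \<union> set P) - {P ! i}) \<union> set (rev W)) (replE (extE E C C' P) (P ! i) (Lc i) (Rc i) (rev W))"
      using caseA[OF hG i _ _ _, of "rev W"] lW dW dWV by simp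
    then show ?thesis using 2 by (simp add: replE_rev)
  qed
qed

lemma stepV:
  assumes hG: "gate V E" and IH: "IHP V E" and I1H: "\<forall>x\<in>V. \<exists>y. {x, y} \<in> E"
    and gG: "ginv (V \<union> set P) (extE E C C' P)"
    and vV: "v \<in> V" and vC': "v \<notin> C'"
    and cl1: "clique (V \<union> set P) (extE E C C' P) C1" and cl2: "clique (V \<union> set P) (extE E C C' P) C2"
    and C12: "C1 \<inter> C2 = {v}"
    and lW: "length W \<ge> 2" and dW: "distinct W" and dWV: "set W \<inter> (V \<union> set P) = {}"
  shows "gate (((V \<union> set P) - {v}) \<union> set W) (replE (extE E C C' P) v C1 C2 W)"
proof -
  have p1: "v \<in> C1" "v \<in> C2" using C12 by auto
  show ?thesis
  proof (cases "v \<in> C")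
    case False
    have d1: "C1 \<inter> set P = {}" using cl_Vx[OF cl1 vV p1(1)] False vC' by blast
    have d2: "C2 \<inter> set P = {}" using cl_Vx[OF cl2 vV p1(2)] False vC' by blast
    have "clique V E C1" "clique V E C2" using cl_V[OF cl1 d1] cl_V[OF cl2 d2] by auto
    then show ?thesis using caseB1[OF hG IH vV False vC' _ _ C12 lW dW dWV] by blast
  next
    case True
    define X where "X = insert (hd P) C"
    have clX: "clique (V \<union> set P) (extE E C C' P) X" using cl_hd X_def by simp
    have vX: "v \<in> X" using True X_def by simp
    have i2: "I2 (V \<union> set P) (extE E C C' P)" using gG unfolding ginv_def by blast
    have three: "C1 = C2 \<or> C1 = X \<or> C2 = X"
      using i2[unfolded I2_def, rule_format, of C1 C2 X v] cl1 cl2 clX p1 vX by blast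
    have I0G: "\<forall>e\<in>extE E C C' P. \<exists>x y. e = {x, y} \<and> x \<noteq> y \<and> x \<in> V \<union> set P \<and> y \<in> V \<union> set P"
      using gG unfolding ginv_def by blast
    obtain y where y: "{v, y} \<in> extE E C C' P" using gG vV unfolding ginv_def by blast
    obtain a b where ab: "{v, y} = {a, b}" "a \<noteq> b" "a \<in> V \<union> set P" "b \<in> V \<union> set P" using I0G y by blast
    have yv: "y \<noteq> v" "y \<in> V \<union> set P" using ab by (auto simp: doubleton_eq_iff)
    have "C1 - {v} \<noteq> {}" using clique_two[OF cl1 p1(1) y yv(2) yv(1)] .
    then have "C1 \<noteq> C2" using C12 by blast
    then consider "C1 = X" | "C2 = X" using three by blast
    then show ?thesis
    proof cases
      case 1
      then have "C2 \<noteq> X" using `C1 \<noteq> C2` by blast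
      then have d2: "C2 \<inter> set P = {}" using cl_Vx[OF cl2 vV p1(2)] vC' X_def by blast
      have c2: "clique V E C2" using cl_V[OF cl2 d2] by blast
      have "C \<inter> C2 = {v}" using C12 1 X_def True by blast
      from caseB2[OF hG IH I1H True c2 this lW dW dWV] show ?thesis using 1 X_def by simp
    next
      case 2
      then have "C1 \<noteq> X" using `C1 \<noteq> C2` by blast
      then have d1: "C1 \<inter> set P = {}" using cl_Vx[OF cl1 vV p1(1)] vC' X_def by blast
      have c1: "clique V E C1" using cl_V[OF cl1 d1] by blast
      have "C \<inter> C1 = {v}" using C12 2 X_def True by blast
      from caseB2[OF hG IH I1H True c1 this, of "rev W"] lW dW dWV
      have "gate (((V \<union> set P) - {v}) \<union> set (rev W)) (replE (extE E C C' P) v X C1 (rev W))"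
        using X_def by simp
      then show ?thesis using 2 by (simp add: replE_rev)
    qed
  qed
qed

lemma step:
  assumes hG: "gate V E" and IH: "IHP V E" and I1H: "\<forall>x\<in>V. \<exists>y. {x, y} \<in> E"
  shows "IHP (V \<union> set P) (extE E C C' P)"
  unfolding IHP_def
proof (intro allI impI, elim conjE)
  fix v C1 C2 W
  assume v: "v \<in> V \<union> set P"
    and cl1: "clique (V \<union> set P) (extE E C C' P) C1" and cl2: "clique (V \<union> set P) (extE E C C' P) C2"
    and C12: "C1 \<inter> C2 = {v}"
    and lW: "2 \<le> length W" and dW: "distinct W" and dWV: "set W \<inter> (V \<union> set P) = {}"
  have gG: "ginv (V \<union> set P) (extE E C C' P)" using gate_inv[OF gate_ext[OF hG clC clC' disj len dist Pdisj]] .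
  show "gate (((V \<union> set P) - {v}) \<union> set W) (replE (extE E C C' P) v C1 C2 W)"
  proof (cases "v \<in> set P")
    case True
    then obtain i where i: "i < length P" "v = P ! i" by (metis in_set_conv_nth)
    show ?thesis using stepP[OF hG i(1) cl1 cl2 _ lW dW dWV] C12 i(2) by simp
  next
    case False
    then have vV: "v \<in> V" using v by blast
    show ?thesis
    proof (cases "v \<in> C'")
      case False
      show ?thesis using stepV[OF hG IH I1H gG vV False cl1 cl2 C12 lW dW dWV] .
    next
      case True
      then have vC: "v \<notin> C" using disj by blast
      have e1: "extE E C' C (rev P) = extE E C C' P" using extE_rev[of E C' C P] by simp
      have e2: "V \<union> set (rev P) = V \<union> set P" by simp
      from ext_setup.stepV[OF ext_rev hG IH I1H, unfolded e1 e2, OF gG vV vC cl1 cl2 C12 lW dW dWV]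
      show ?thesis .
    qed
  qed
qed

end

lemma main: "gate V E \<Longrightarrow> IHP V E"
proof (induction rule: gate.induct)
  case (cycle n f V E)
  have c: "cyc n f V E" unfolding cyc_def using cycle.hyps(1,2) by (simp add: cycle.hyps(3))
  interpret cyc n f V E by (rule c)
  show ?case unfolding IHP_def
  proof (intro allI impI, elim conjE)
    fix v C1 C2 W
    assume v: "v \<in> V" and cl1: "clique V E C1" and cl2: "clique V E C2" and C12: "C1 \<inter> C2 = {v}"
      and lW: "2 \<le> length W" and dW: "distinct W" and dWV: "set W \<inter> V = {}"
    obtain k where k: "k < n" "v = f k" using Vg v by blast
    obtain g where g: "cyc n g V E" "g (n - 1) = f k" using rotate[OF c k(1)] by blast
    have vg: "v = g (n - 1)" using g(2) k(2) by simp
    have p: "g (n - 1) \<in> C1" "g (n - 1) \<in> C2" using C12 vg by auto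
    have h1: "C1 = {g (n - 2), g (n - 1)} \<or> C1 = {g (n - 1), g 0}" using cyc.cyc_clique[OF g(1) cl1 p(1)] .
    have h2: "C2 = {g (n - 2), g (n - 1)} \<or> C2 = {g (n - 1), g 0}" using cyc.cyc_clique[OF g(1) cl2 p(2)] .
    have "n - 2 < n" "n - 1 < n" "0 < n" "n - 2 \<noteq> n - 1" "0 \<noteq> n - 1" using n4 by auto
    then have ne: "g (n - 2) \<noteq> g (n - 1)" "g 0 \<noteq> g (n - 1)" using cyc.ginj[OF g(1)] by metis+
    have "C1 \<noteq> C2"
    proof
      assume "C1 = C2"
      then have "C1 = {g (n - 1)}" using C12 vg by simp
      then show False using h1 ne by (auto simp: doubleton_eq_iff)
    qed
    then consider "C1 = {g (n - 2), g (n - 1)}" "C2 = {g (n - 1), g 0}"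
      | "C1 = {g (n - 1), g 0}" "C2 = {g (n - 2), g (n - 1)}" using h1 h2 by blast
    then show "gate ((V - {v}) \<union> set W) (replE E v C1 C2 W)"
    proof cases
      case 1
      then show ?thesis using cyc.cyc_new[OF g(1) lW dW dWV] vg by simp
    next
      case 2
      have "gate ((V - {g (n - 1)}) \<union> set (rev W)) (replE E (g (n - 1)) {g (n - 2), g (n - 1)} {g (n - 1), g 0} (rev W))"
        using cyc.cyc_new[OF g(1), of "rev W"] lW dW dWV by simp
      then show ?thesis using 2 vg by (simp add: replE_rev)
    qed
  qed
next
  case (extend V E C C' P)
  have gi: "ginv V E" using gate_inv[OF extend.hyps(1)] .
  have g: "(\<forall>e\<in>E. \<exists>x y. e = {x, y} \<and> x \<noteq> y \<and> x \<in> V \<and> y \<in> V)" "V \<noteq> {}"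
     "\<forall>x\<in>V. \<exists>y. {x, y} \<in> E"
    using gi unfolding ginv_def by blast+
  have es: "ext_setup V E C C' P"
    unfolding ext_setup_def using g(1,2) extend.hyps(2-7) by (intro conjI)
  have eq: "E \<union> path_edges P \<union> {{hd P, c} |c. c \<in> C} \<union> {{last P, c} |c. c \<in> C'} = extE E C C' P"
    by (simp add: extE_def star_def)
  show ?case unfolding eq using ext_setup.step[OF es extend.hyps(1) extend.IH g(3)] .
qed

theorem lemma6:
  fixes V :: "'a set" and E :: "'a set set" and v :: 'a and C1 C2 :: "'a set"
    and W :: "'a list"
  assumes "gate V E"
    and "v \<in> V"
    and "clique V E C1" and "clique V E C2"
    and "C1 \<inter> C2 = {v}"
    and "length W \<ge> 2" and "distinct W" and "set W \<inter> V = {}"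
  shows "gate ((V - {v}) \<union> set W)
              (del_edges E v \<union> path_edges W
                \<union> {{hd W, c} | c. c \<in> C1 - {v}} \<union> {{last W, c} | c. c \<in> C2 - {v}})"
proof -
  have "gate ((V - {v}) \<union> set W) (replE E v C1 C2 W)"
    using main[OF assms(1)] assms(2-8) unfolding IHP_def by blast
  then show ?thesis unfolding replE_def star_def .
qed

end
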